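(* Let $k$ be a positive integer. Let $I_1,\dots,I_n\subset\mathbb{R}$ be segments of lengths $\ell_1,\dots,\ell_n>0$ with midpoints $c_1,\dots,c_n$. Assume that every point of $\mathbb{R}$ belongs to at most $k$ of the interiors of $I_1,\dots,I_n$. Let $c=\frac{\sum_i\ell_ic_i}{\sum_i\ell_i}$, and let $I$ be the segment of length $\frac1k\sum_i\ell_i$ with midpoint $c$. Then $I\subset\operatorname{conv}\bigcup_i I_i$. *)

theory Defs
  imports "HOL-Analysis.Analysis"
begin

end

theory Submission
  imports Defs
begin

lemma ind_int:
  fixes lo hi A B b :: real
  assumes "A \<le> lo" "lo \<le> hi" "hi \<le> B"
  shows "((\<lambda>x. indicator {lo<..<hi} x * (b - x)) has_integral (b*hi - hi^2/2 - (b*lo - lo^2/2))) {A..B}"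
proof -
  have "((\<lambda>x. b - x) has_integral ((\<lambda>x. b*x - x^2/2) hi - (\<lambda>x. b*x - x^2/2) lo)) {lo..hi}"
    by (rule fundamental_theorem_of_calculus[OF assms(2)])
       (auto intro!: derivative_eq_intros simp: has_real_derivative_iff_has_vector_derivative[symmetric])
  then have H: "((\<lambda>x. if x \<in> cbox lo hi then b - x else 0) has_integral (b*hi - hi^2/2 - (b*lo - lo^2/2))) (cbox A B)"
    using assms by (intro has_integral_restrict_closed_subinterval) auto
  then have H': "((\<lambda>x. if x \<in> {lo..hi} then b - x else 0) has_integral (b*hi - hi^2/2 - (b*lo - lo^2/2))) {A..B}"
    by (simp only: cbox_interval)
  show ?thesis
    by (rule has_integral_spike_finite[where S="{lo,hi}", OF _ _ H']) (auto simp: indicator_def)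
qed

lemma ind_int1:
  fixes lo hi A B :: real
  assumes "A \<le> lo" "lo \<le> hi" "hi \<le> B"
  shows "((\<lambda>x. indicator {lo<..<hi} x) has_integral (hi - lo)) {A..B}"
proof -
  have "((\<lambda>x. 1) has_integral (hi - lo)) {lo..hi}"
    using has_integral_const_real[of "1::real" lo hi] assms by simp
  then have H: "((\<lambda>x. if x \<in> cbox lo hi then 1 else 0) has_integral (hi - lo)) (cbox A B)"
    using assms by (intro has_integral_restrict_closed_subinterval) auto
  then have H': "((\<lambda>x. if x \<in> {lo..hi} then 1 else 0) has_integral (hi - lo)) {A..B}"
    by (simp only: cbox_interval)
  show ?thesis
    by (rule has_integral_spike_finite[where S="{lo,hi}", OF _ _ H']) (auto simp: indicator_def)
qed

lemma right_bound:
  fixes k n :: nat and l c :: "nat \<Rightarrow> real" and b :: real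
  assumes k: "k > 0" and lp: "\<And>i. i < n \<Longrightarrow> l i > 0" and hb: "\<And>i. i < n \<Longrightarrow> c i + l i / 2 \<le> b"
    and dep: "\<And>x::real. card {i. i < n \<and> x \<in> {c i - l i / 2 <..< c i + l i / 2}} \<le> k"
  shows "(\<Sum>i<n. l i)^2 / (2 * real k) \<le> (\<Sum>i<n. l i * (b - c i))"
proof -
  define L where "L = (\<Sum>i<n. l i)"
  define h where "h = L / real k"
  define S where "S = (\<Sum>i<n. l i * (b - c i))"
  define A where "A = b - h - (\<Sum>i<n. l i + \<bar>b - c i\<bar>)"
  have L0: "L \<ge> 0" unfolding L_def using lp by (meson lessThan_iff less_imp_le sum_nonneg)
  have h0: "h \<ge> 0" unfolding h_def using L0 by simp
  have Alo: "A \<le> c i - l i / 2" if "i < n" for i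
  proof -
    have "l i + \<bar>b - c i\<bar> \<le> (\<Sum>i<n. l i + \<bar>b - c i\<bar>)"
      by (rule member_le_sum) (use that lp in \<open>auto intro: add_nonneg_nonneg less_imp_le simp: add_nonneg_nonneg[OF less_imp_le]\<close>)
    then show ?thesis unfolding A_def using h0 lp[OF that] by linarith
  qed
  define f where "f x = (\<Sum>i<n. indicator {c i - l i / 2 <..< c i + l i / 2} x :: real)" for x
  define g where "g x = (indicator {b - h <..< b} x :: real)" for x
  have fk: "f x \<le> real k" for x
  proof -
    have "f x = real (card {i. i < n \<and> x \<in> {c i - l i / 2 <..< c i + l i / 2}})"
      unfolding f_def indicator_def by (simp add: sum.If_cases Int_def conj_commute)
    then show ?thesis using dep[of x] by simp
  qed
  have f0: "f x \<ge> 0" for x unfolding f_def by (simp add: sum_nonneg)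
  have fb: "f b = 0" unfolding f_def using hb by (auto intro!: sum.neutral simp: indicator_def) (meson not_le)
  have I1: "((\<lambda>x. f x * (b - x)) has_integral S) {A..b}"
  proof -
    have "((\<lambda>x. \<Sum>i<n. indicator {c i - l i / 2 <..< c i + l i / 2} x * (b - x)) has_integral
        (\<Sum>i<n. b*(c i + l i / 2) - (c i + l i / 2)^2/2 - (b*(c i - l i / 2) - (c i - l i / 2)^2/2))) {A..b}"
      apply (rule has_integral_sum, simp)
      subgoal for i using Alo[of i] lp[of i] hb[of i] by (intro ind_int) auto
      done
    moreover have "(\<Sum>i<n. b*(c i + l i / 2) - (c i + l i / 2)^2/2 - (b*(c i - l i / 2) - (c i - l i / 2)^2/2)) = S"
      unfolding S_def by (rule sum.cong) (auto simp: power2_eq_square field_simps)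
    ultimately show ?thesis unfolding f_def by (simp add: sum_distrib_right)
  qed
  have I2: "(f has_integral L) {A..b}"
  proof -
    have "((\<lambda>x. \<Sum>i<n. indicator {c i - l i / 2 <..< c i + l i / 2} x) has_integral
        (\<Sum>i<n. (c i + l i / 2) - (c i - l i / 2))) {A..b}"
      apply (rule has_integral_sum, simp)
      subgoal for i using Alo[of i] lp[of i] hb[of i] by (intro ind_int1) auto
      done
    then show ?thesis unfolding f_def L_def by simp
  qed
  have Ah: "A \<le> b - h"
  proof -
    have "0 \<le> (\<Sum>i<n. l i + \<bar>b - c i\<bar>)"
      apply (rule sum_nonneg)
      subgoal for i using lp[of i] by simp
      done
    then show ?thesis unfolding A_def by simp
  qed
  have I3: "((\<lambda>x. g x * (b - x)) has_integral h^2/2) {A..b}"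
  proof -
    have X: "((\<lambda>x. g x * (b - x)) has_integral (b*b - b^2/2 - (b*(b-h) - (b-h)^2/2))) {A..b}"
      unfolding g_def by (rule ind_int) (use Ah h0 in auto)
    have "b*b - b^2/2 - (b*(b-h) - (b-h)^2/2) = h^2/2" by (simp add: power2_eq_square field_simps)
    then show ?thesis using X by (simp only:)
  qed
  have I4: "(g has_integral h) {A..b}"
  proof -
    have "(g has_integral (b - (b - h))) {A..b}"
      unfolding g_def by (rule ind_int1) (use Ah h0 in auto)
    then show ?thesis by simp
  qed
  have Itot: "((\<lambda>x. f x * (b - x) - h * f x - real k * (g x * (b - x)) + h * real k * g x) has_integral
      (S - h * L - real k * (h^2/2) + h * real k * h)) {A..b}"
    by (intro has_integral_add has_integral_diff has_integral_mult_right I1 I2 I3 I4)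
  have "0 \<le> S - h * L - real k * (h^2/2) + h * real k * h"
  proof (rule has_integral_nonneg[OF Itot])
    fix x assume x: "x \<in> {A..b}"
    have eq: "f x * (b - x) - h * f x - real k * (g x * (b - x)) + h * real k * g x
        = (b - x - h) * (f x - real k * g x)" by (simp add: algebra_simps)
    show "0 \<le> f x * (b - x) - h * f x - real k * (g x * (b - x)) + h * real k * g x"
      unfolding eq
    proof (cases "x \<in> {b - h <..< b}")
      case True
      then show "0 \<le> (b - x - h) * (f x - real k * g x)"
        using fk[of x] by (auto simp: g_def intro!: mult_nonpos_nonpos)
    next
      case False
      then have g0: "g x = 0" by (simp add: g_def)
      show "0 \<le> (b - x - h) * (f x - real k * g x)"
      proof (cases "x = b")
        case True then show ?thesis using fb g0 by simp
      next
        case False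
        then have "x \<le> b - h" using x \<open>x \<notin> {b - h <..< b}\<close> by auto
        then show ?thesis using g0 f0[of x] by simp
      qed
    qed
  qed
  moreover have "h * L = L^2 / real k" "real k * (h^2/2) = L^2 / (2 * real k)" "h * real k * h = L^2 / real k"
    unfolding h_def using k by (auto simp: power2_eq_square field_simps)
  ultimately show ?thesis unfolding S_def[symmetric] L_def[symmetric] by (simp add: field_simps)
qed

theorem lemma8:
  fixes k n :: nat and l c :: "nat \<Rightarrow> real"
  assumes "k > 0" and "n \<ge> 1"
    and "\<And>i. i < n \<Longrightarrow> l i > 0"
    and "\<And>x::real. card {i. i < n \<and> x \<in> {c i - l i / 2 <..< c i + l i / 2}} \<le> k"
  shows "{(\<Sum>i<n. l i * c i) / (\<Sum>i<n. l i) - (\<Sum>i<n. l i) / real k / 2 ..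
          (\<Sum>i<n. l i * c i) / (\<Sum>i<n. l i) + (\<Sum>i<n. l i) / real k / 2}
         \<subseteq> convex hull (\<Union>i<n. {c i - l i / 2 .. c i + l i / 2})"
proof -
  define L where "L = (\<Sum>i<n. l i)"
  define S where "S = (\<Sum>i<n. l i * c i)"
  define U where "U = (\<Union>i<n. {c i - l i / 2 .. c i + l i / 2})"
  define b where "b = Max ((\<lambda>i. c i + l i / 2) ` {..<n})"
  define a where "a = Min ((\<lambda>i. c i - l i / 2) ` {..<n})"
  have ne: "{..<n} \<noteq> {}" using assms(2) by (simp add: lessThan_empty_iff)
  have L0: "L > 0" unfolding L_def using assms(3) ne by (intro sum_pos) auto
  have hb: "c i + l i / 2 \<le> b" if "i < n" for i unfolding b_def using that by (intro Max_ge) auto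
  have ha: "a \<le> c i - l i / 2" if "i < n" for i unfolding a_def using that by (intro Min_le) auto
  have "b \<in> (\<lambda>i. c i + l i / 2) ` {..<n}" unfolding b_def using ne by (intro Max_in) auto
  then obtain ib where ib: "ib < n" "b = c ib + l ib / 2" by auto
  have "a \<in> (\<lambda>i. c i - l i / 2) ` {..<n}" unfolding a_def using ne by (intro Min_in) auto
  then obtain ia where ia: "ia < n" "a = c ia - l ia / 2" by auto
  have bU: "b \<in> U" unfolding U_def using ib assms(3)[OF ib(1)] by (intro UN_I[of ib]) auto
  have aU: "a \<in> U" unfolding U_def using ia assms(3)[OF ia(1)] by (intro UN_I[of ia]) auto
  have R: "L^2 / (2 * real k) \<le> (\<Sum>i<n. l i * (b - c i))"
    unfolding L_def by (rule right_bound[OF assms(1) assms(3) hb assms(4)])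
  have dep': "card {i. i < n \<and> x \<in> {(- c i) - l i / 2 <..< (- c i) + l i / 2}} \<le> k" for x
  proof -
    have "{i. i < n \<and> x \<in> {(- c i) - l i / 2 <..< (- c i) + l i / 2}}
        = {i. i < n \<and> (-x) \<in> {c i - l i / 2 <..< c i + l i / 2}}" by auto
    then show ?thesis using assms(4)[of "-x"] by simp
  qed
  have haneg: "- c i + l i / 2 \<le> - a" if "i < n" for i using ha[OF that] by linarith
  have Lf: "L^2 / (2 * real k) \<le> (\<Sum>i<n. l i * ((-a) - (- c i)))"
    unfolding L_def by (rule right_bound[OF assms(1) assms(3) haneg dep'])
  have e1: "(\<Sum>i<n. l i * (b - c i)) = b * L - S"
    unfolding L_def S_def by (simp add: right_diff_distrib sum_subtractf sum_distrib_right sum_distrib_left mult.commute)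
  have e2: "(\<Sum>i<n. l i * ((-a) - (- c i))) = S - a * L"
    unfolding L_def S_def by (simp add: right_diff_distrib sum_subtractf sum_distrib_right sum_distrib_left mult.commute)
  have kpos: "real k > 0" using assms(1) by simp
  have up: "S / L + L / real k / 2 \<le> b"
  proof -
    have "L / real k / 2 = (L^2 / (2 * real k)) / L" using L0 by (simp add: power2_eq_square field_simps)
    also have "\<dots> \<le> (b * L - S) / L" by (rule divide_right_mono) (use R e1 L0 in auto)
    finally show ?thesis using L0 by (simp add: field_simps)
  qed
  have lo: "a \<le> S / L - L / real k / 2"
  proof -
    have "L / real k / 2 = (L^2 / (2 * real k)) / L" using L0 by (simp add: power2_eq_square field_simps)
    also have "\<dots> \<le> (S - a * L) / L" by (rule divide_right_mono) (use Lf e2 L0 in auto)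
    finally show ?thesis using L0 by (simp add: field_simps)
  qed
  have "{a..b} \<subseteq> convex hull U"
  proof -
    have "a \<le> b" using lo up L0 kpos by (smt (verit) divide_nonneg_nonneg)
    then have "{a..b} = closed_segment a b" by (simp add: closed_segment_eq_real_ivl)
    also have "\<dots> \<subseteq> convex hull U"
      by (rule closed_segment_subset) (use aU bU in \<open>auto intro: hull_inc\<close>)
    finally show ?thesis .
  qed
  then show ?thesis using lo up unfolding L_def[symmetric] S_def[symmetric] U_def[symmetric] by auto
qed

end
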